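(* Let $j_1,j_2$ be real numbers, $p\in\{0,1\}$, and let $\Psi_1$ (of parity $p$) and $\Psi_2$ be the generating highest-weight vectors of two $\mathfrak{sl}(2|1)$-modules of the same chirality: either both left-chiral, $[j_1,-j_1]$ and $[j_2,-j_2]$ (upper signs, $\mathbf X=\mathbf V_+$), or both right-chiral, $[j_1,j_1]$ and $[j_2,j_2]$ (lower signs, $\mathbf X=\mathbf W_+$). Let $\mathbf U_+=\mathbf V_++\mathbf W_+$. Then for every $n\ge 0$, $$n!\,(-1)^{p+1}\sum_{k_1+k_2=2n+1}\frac{(-1)^{\lfloor (k_1+1-p)/2\rfloor}}{\Gamma\!\left(1+\lfloor\frac{k_1}{2}\rfloor\right)\Gamma\!\left(1+\lfloor\frac{k_2}{2}\rfloor\right)\Gamma\!\left(2j_1+\lfloor\frac{k_1+1}{2}\rfloor\right)\Gamma\!\left(2j_2+\lfloor\frac{k_2+1}{2}\rfloor\right)}\ \mathbf U_+^{k_1}\Psi_1\otimes\mathbf U_+^{k_2}\Psi_2$$ equals $$\sum_{n_1+n_2=n}\binom{n}{n_1}(-1)^{n_1}\left[\frac{\mathbf L_+^{n_1}\mathbf X\Psi_1\otimes\mathbf L_+^{n_2}\Psi_2}{\Gamma(2j_1+1+n_1)\Gamma(2j_2+n_2)}-(-1)^p\frac{\mathbf L_+^{n_1}\Psi_1\otimes\mathbf L_+^{n_2}\mathbf X\Psi_2}{\Gamma(2j_1+n_1)\Gamma(2j_2+1+n_2)}\right],$$ and this vector is a highest-weight vector of the tensor product, with $\mathbf L$-eigenvalue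 $j_1+j_2+n+\tfrac12$ and $\mathbf B$-eigenvalue $\mp(j_1+j_2)\pm\tfrac12$.
   Context: $\mathfrak{sl}(2|1)$ denotes the complex Lie superalgebra with even basis $\mathbf L_+,\mathbf L_-,\mathbf L,\mathbf B$ and odd basis $\mathbf V_+,\mathbf V_-,\mathbf W_+,\mathbf W_-$, with relations: $[\mathbf L_+,\mathbf L_-]=2\mathbf L$, $[\mathbf L,\mathbf L_\pm]=\pm\mathbf L_\pm$, $\mathbf B$ commutes with $\mathbf L_\pm,\mathbf L$; for $\mathbf X\in\{\mathbf V,\mathbf W\}$: $[\mathbf L,\mathbf X_\pm]=\pm\tfrac12\mathbf X_\pm$, $[\mathbf L_+,\mathbf X_-]=\mathbf X_+$, $[\mathbf L_-,\mathbf X_+]=\mathbf X_-$, $[\mathbf L_+,\mathbf X_+]=[\mathbf L_-,\mathbf X_-]=0$; $[\mathbf B,\mathbf V_\pm]=\tfrac12\mathbf V_\pm$, $[\mathbf B,\mathbf W_\pm]=-\tfrac12\mathbf W_\pm$; $\{\mathbf V_a,\mathbf V_b\}=\{\mathbf W_a,\mathbf W_b\}=0$, $\{\mathbf V_+,\mathbf W_+\}=\mathbf L_+$, $\{\mathbf V_+,\mathbf W_-\}=-\mathbf L+\mathbf B$, $\{\mathbf V_-,\mathbf W_+\}=-\mathbf L-\mathbf B$, $\{\mathbf V_-,\mathbf W_-\}=-\mathbf L_-$. The left-chiral module $[J,-J]$ is the $\mathbb Z_2$-graded module generated by a homogeneous vector $\Omega$ with $\mathbf L_-\Omega=\mathbf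 V_-\Omega=\mathbf W_-\Omega=\mathbf W_+\Omega=0$, $\mathbf L\Omega=J\Omega$, $\mathbf B\Omega=-J\Omega$ (basis $\mathbf L_+^n\Omega,\mathbf L_+^n\mathbf V_+\Omega$); the right-chiral module $[J,J]$ is generated by $\Omega$ with $\mathbf L_-\Omega=\mathbf V_-\Omega=\mathbf W_-\Omega=\mathbf V_+\Omega=0$, $\mathbf L\Omega=J\Omega$, $\mathbf B\Omega=J\Omega$ (basis $\mathbf L_+^n\Omega,\mathbf L_+^n\mathbf W_+\Omega$). A highest-weight vector is one annihilated by $\mathbf L_-,\mathbf V_-,\mathbf W_-$. Tensor products carry the action $G(x\otimes y)=Gx\otimes y+(-1)^{|G||x|}x\otimes Gy$ for homogeneous $G,x$. Here $1/\Gamma$ is the (entire) reciprocal Gamma function and $\lfloor\cdot\rfloor$ the floor function. *)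

theory Defs
  imports "HOL-Analysis.Analysis"
begin

text \<open>Generators of sl(2|1): even Lp, Lm, L0 (= L), Bg (= B); odd Vp, Vm, Wp, Wm.\<close>
datatype gen = Lp | Lm | L0 | Bg | Vp | Vm | Wp | Wm

definition odd_gen :: "gen \<Rightarrow> bool" where
  "odd_gen G \<longleftrightarrow> G \<in> {Vp, Vm, Wp, Wm}"

text \<open>Chiral module of chirality c (c = True: left-chiral [J,-J] with X = V+;
  c = False: right-chiral [J,J] with X = W+).  Basis index (n, False) stands for
  L+^n Omega and (n, True) for L+^n X Omega.  Vectors are coefficient functions
  on the basis.  mcoef c J G a b is the coefficient of basis vector a in G applied
  to basis vector b; these are the matrix entries forced by the defining relations.\<close>
type_synonym idx = "nat \<times> bool"
type_synonym vec = "idx \<Rightarrow> complex"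
type_synonym tvec = "idx \<times> idx \<Rightarrow> complex"

fun mcoef :: "bool \<Rightarrow> real \<Rightarrow> gen \<Rightarrow> idx \<Rightarrow> idx \<Rightarrow> complex" where
  "mcoef c J Lp (m, y) (n, x) = (if m = Suc n \<and> y = x then 1 else 0)"
| "mcoef c J Lm (m, y) (n, x) =
     (if Suc m = n \<and> y = x then
        (if x then - of_nat n * (2 * of_real J + of_nat n)
         else - of_nat n * (2 * of_real J + of_nat n - 1)) else 0)"
| "mcoef c J L0 (m, y) (n, x) =
     (if m = n \<and> y = x then of_real J + of_nat n + (if x then 1/2 else 0) else 0)"
| "mcoef c J Bg (m, y) (n, x) =
     (if m = n \<and> y = x then
        (if c then - of_real J + (if x then 1/2 else 0)
         else of_real J - (if x then 1/2 else 0)) else 0)"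
| "mcoef c J Vp (m, y) (n, x) =
     (if c then (if \<not> x \<and> y \<and> m = n then 1 else 0)
      else (if x \<and> \<not> y \<and> m = Suc n then 1 else 0))"
| "mcoef c J Wp (m, y) (n, x) =
     (if \<not> c then (if \<not> x \<and> y \<and> m = n then 1 else 0)
      else (if x \<and> \<not> y \<and> m = Suc n then 1 else 0))"
| "mcoef c J Vm (m, y) (n, x) =
     (if c then (if \<not> x \<and> y \<and> Suc m = n then - of_nat n else 0)
      else (if x \<and> \<not> y \<and> m = n then - (2 * of_real J + of_nat n) else 0))"
| "mcoef c J Wm (m, y) (n, x) =
     (if \<not> c then (if \<not> x \<and> y \<and> Suc m = n then - of_nat n else 0)
      else (if x \<and> \<not> y \<and> m = n then - (2 * of_real J + of_nat n) else 0))"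

text \<open>Action on a vector (only basis vectors b with fst b \<le> fst a + 1 can contribute to a).\<close>
definition act :: "bool \<Rightarrow> real \<Rightarrow> gen \<Rightarrow> vec \<Rightarrow> vec" where
  "act c J G v = (\<lambda>a. \<Sum>b\<in>{b. fst b \<le> Suc (fst a)}. mcoef c J G a b * v b)"

definition basis_vec :: "idx \<Rightarrow> vec" where
  "basis_vec a = (\<lambda>b. if b = a then 1 else 0)"

definition Omega :: vec where "Omega = basis_vec (0, False)"

definition Xgen :: "bool \<Rightarrow> gen" where "Xgen c = (if c then Vp else Wp)"

definition Uplus :: "bool \<Rightarrow> real \<Rightarrow> vec \<Rightarrow> vec" where
  "Uplus c J v = (\<lambda>a. act c J Vp v a + act c J Wp v a)"

definition par :: "nat \<Rightarrow> idx \<Rightarrow> nat" where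
  "par p a = (p + (if snd a then 1 else 0)) mod 2"

text \<open>Tensor product: vectors are coefficient functions on pairs of basis indices;
  pure tensor, and the action G(x\<otimes>y) = Gx\<otimes>y + (-1)^(|G||x|) x\<otimes>Gy, where the
  first factor's generating vector has parity p.\<close>
definition tens :: "vec \<Rightarrow> vec \<Rightarrow> tvec" where
  "tens x y = (\<lambda>(a, b). x a * y b)"

definition tact :: "bool \<Rightarrow> real \<Rightarrow> real \<Rightarrow> nat \<Rightarrow> gen \<Rightarrow> tvec \<Rightarrow> tvec" where
  "tact c J1 J2 p G w = (\<lambda>(a1, a2).
      (\<Sum>b1\<in>{b. fst b \<le> Suc (fst a1)}. mcoef c J1 G a1 b1 * w (b1, a2))
    + (if odd_gen G \<and> par p a1 = 1 then -1 else 1) *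
      (\<Sum>b2\<in>{b. fst b \<le> Suc (fst a2)}. mcoef c J2 G a2 b2 * w (a1, b2)))"

lemma finite_idx_le: "finite {b :: idx. fst b \<le> k}"
proof -
  have "{b :: idx. fst b \<le> k} \<subseteq> {..k} \<times> UNIV" by auto
  thus ?thesis by (rule finite_subset) auto
qed

lemma Omega_conditions:
  "act c J Lm Omega = (\<lambda>_. 0)" "act c J Vm Omega = (\<lambda>_. 0)" "act c J Wm Omega = (\<lambda>_. 0)"
  "act c J (if c then Wp else Vp) Omega = (\<lambda>_. 0)"
  "act c J L0 Omega = (\<lambda>a. of_real J * Omega a)"
  "act c J Bg Omega = (\<lambda>a. (if c then - of_real J else of_real J) * Omega a)"
  by (auto simp: act_def Omega_def basis_vec_def fun_eq_iff if_distrib[of "\<lambda>x. _ * x"]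
           sum.delta finite_idx_le split: prod.splits cong: if_cong)

end

theory Submission
  imports Defs
begin


definition Acoef :: "nat \<Rightarrow> real \<Rightarrow> real \<Rightarrow> nat \<Rightarrow> real" where
  "Acoef n j1 j2 k = real (n choose k) * (-1) ^ k * (rGamma (2 * j1 + 1 + real k) * rGamma (2 * j2 + real (n - k)))"
definition Bcoef :: "nat \<Rightarrow> real \<Rightarrow> real \<Rightarrow> nat \<Rightarrow> nat \<Rightarrow> real" where
  "Bcoef n j1 j2 p k = - ((-1) ^ p * (real (n choose k) * (-1) ^ k * (rGamma (2 * j1 + real k) * rGamma (2 * j2 + 1 + real (n - k)))))"

lemma rG_rec: "(x::real) * rGamma (x + 1) = rGamma x"
  by (rule rGamma_plus1)

lemma binom_rec: "real (Suc m1) * real (Suc (m1 + m2) choose Suc m1) = real (Suc m2) * real (Suc (m1 + m2) choose m1)"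
proof -
  have "Suc m1 * (Suc (m1 + m2) choose Suc m1) = (Suc (m1+m2) - m1) * (Suc (m1 + m2) choose m1)"
    by (simp only: binomial_absorption binomial_absorb_comp)
  also have "Suc (m1+m2) - m1 = Suc m2" by simp
  finally show ?thesis by (metis of_nat_mult)
qed

lemma L1: "real (Suc m1) * (2*j1 + real m1 + 1) * Acoef (Suc (m1+m2)) j1 j2 (Suc m1)
   + real (Suc m2) * (2*j2 + real m2) * Acoef (Suc (m1+m2)) j1 j2 m1 = 0"
proof -
  define C1 where "C1 = real (Suc (m1 + m2) choose Suc m1)"
  define C0 where "C0 = real (Suc (m1 + m2) choose m1)"
  define X1 where "X1 = rGamma (2 * j1 + 1 + real m1 + 1)"
  define Y1 where "Y1 = rGamma (2 * j2 + real m2 + 1)"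
  have e2: "rGamma (2 * j1 + 1 + real m1) = (2 * j1 + 1 + real m1) * X1" unfolding X1_def by (rule rG_rec[symmetric])
  have e3: "rGamma (2 * j2 + real m2) = (2 * j2 + real m2) * Y1" unfolding Y1_def by (rule rG_rec[symmetric])
  have e1: "real (Suc m1) * C1 = real (Suc m2) * C0" unfolding C1_def C0_def by (rule binom_rec)
  have a1: "Acoef (Suc (m1+m2)) j1 j2 (Suc m1) = C1 * (-1)^(Suc m1) * (X1 * rGamma (2 * j2 + real m2))"
    unfolding Acoef_def C1_def X1_def by (simp add: algebra_simps)
  have a2: "Acoef (Suc (m1+m2)) j1 j2 m1 = C0 * (-1)^m1 * (rGamma (2 * j1 + 1 + real m1) * Y1)"
    unfolding Acoef_def C0_def Y1_def by (simp add: Suc_diff_le algebra_simps)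
  have "real (Suc m1) * (2*j1 + real m1 + 1) * Acoef (Suc (m1+m2)) j1 j2 (Suc m1)
   + real (Suc m2) * (2*j2 + real m2) * Acoef (Suc (m1+m2)) j1 j2 m1 = 
    (real (Suc m2) * C0 - real (Suc m1) * C1) * ((2*j1 + real m1 + 1) * (2*j2 + real m2) * (-1)^m1 * X1 * Y1)"
    unfolding a1 a2 e2 e3 power_Suc by algebra
  then show ?thesis unfolding e1 by simp
qed


lemma L2: "real (Suc m1) * (2*j1 + real m1) * Bcoef (Suc (m1+m2)) j1 j2 p (Suc m1)
   + real (Suc m2) * (2*j2 + real m2 + 1) * Bcoef (Suc (m1+m2)) j1 j2 p m1 = 0"
proof -
  define C1 where "C1 = real (Suc (m1 + m2) choose Suc m1)"
  define C0 where "C0 = real (Suc (m1 + m2) choose m1)"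
  define X1 where "X1 = rGamma (2 * j1 + real m1 + 1)"
  define Y1 where "Y1 = rGamma (2 * j2 + 1 + real m2 + 1)"
  have e2: "rGamma (2 * j1 + real m1) = (2 * j1 + real m1) * X1" unfolding X1_def by (rule rG_rec[symmetric])
  have e3: "rGamma (2 * j2 + 1 + real m2) = (2 * j2 + 1 + real m2) * Y1" unfolding Y1_def by (rule rG_rec[symmetric])
  have e1: "real (Suc m1) * C1 = real (Suc m2) * C0" unfolding C1_def C0_def by (rule binom_rec)
  have a1: "Bcoef (Suc (m1+m2)) j1 j2 p (Suc m1) = - ((-1)^p * (C1 * (-1)^(Suc m1) * (X1 * rGamma (2 * j2 + 1 + real m2))))"
    unfolding Bcoef_def C1_def X1_def by (simp add: algebra_simps)
  have a2: "Bcoef (Suc (m1+m2)) j1 j2 p m1 = - ((-1)^p * (C0 * (-1)^m1 * (rGamma (2 * j1 + real m1) * Y1)))"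
    unfolding Bcoef_def C0_def Y1_def by (simp add: Suc_diff_le algebra_simps)
  have "real (Suc m1) * (2*j1 + real m1) * Bcoef (Suc (m1+m2)) j1 j2 p (Suc m1)
   + real (Suc m2) * (2*j2 + real m2 + 1) * Bcoef (Suc (m1+m2)) j1 j2 p m1 = 
    (real (Suc m1) * C1 - real (Suc m2) * C0) * ((-1)^p * (2*j1 + real m1) * (2*j2 + real m2 + 1) * (-1)^m1 * X1 * Y1)"
    unfolding a1 a2 e2 e3 power_Suc by algebra
  then show ?thesis unfolding e1 by simp
qed

lemma L3: "- (real (Suc m1) * Bcoef (Suc (m1+m2)) j1 j2 p (Suc m1))
   + (-1)^p * (real (Suc m2) * Acoef (Suc (m1+m2)) j1 j2 m1) = 0"
proof -
  define C1 where "C1 = real (Suc (m1 + m2) choose Suc m1)"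
  define C0 where "C0 = real (Suc (m1 + m2) choose m1)"
  define X1 where "X1 = rGamma (2 * j1 + real m1 + 1)"
  define Y1 where "Y1 = rGamma (2 * j2 + real m2 + 1)"
  have e1: "real (Suc m1) * C1 = real (Suc m2) * C0" unfolding C1_def C0_def by (rule binom_rec)
  have a1: "Bcoef (Suc (m1+m2)) j1 j2 p (Suc m1) = - ((-1)^p * (C1 * (-1)^(Suc m1) * (X1 * Y1)))"
    unfolding Bcoef_def C1_def X1_def Y1_def by (simp add: algebra_simps)
  have a2: "Acoef (Suc (m1+m2)) j1 j2 m1 = C0 * (-1)^m1 * (X1 * Y1)"
    unfolding Acoef_def C0_def X1_def Y1_def by (simp add: Suc_diff_le algebra_simps)
  have "- (real (Suc m1) * Bcoef (Suc (m1+m2)) j1 j2 p (Suc m1))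
   + (-1)^p * (real (Suc m2) * Acoef (Suc (m1+m2)) j1 j2 m1) = 
    (real (Suc m2) * C0 - real (Suc m1) * C1) * ((-1)^p * (-1)^m1 * X1 * Y1)"
    unfolding a1 a2 power_Suc by algebra
  then show ?thesis unfolding e1 by simp
qed

lemma L4: "- ((2*j1 + real m1) * Acoef (m1+m2) j1 j2 m1)
   - (-1)^p * ((2*j2 + real m2) * Bcoef (m1+m2) j1 j2 p m1) = 0"
proof -
  define C0 where "C0 = real ((m1 + m2) choose m1)"
  define X1 where "X1 = rGamma (2 * j1 + real m1 + 1)"
  define Y1 where "Y1 = rGamma (2 * j2 + real m2 + 1)"
  have e2: "rGamma (2 * j1 + real m1) = (2 * j1 + real m1) * X1" unfolding X1_def by (rule rG_rec[symmetric])
  have e3: "rGamma (2 * j2 + real m2) = (2 * j2 + real m2) * Y1" unfolding Y1_def by (rule rG_rec[symmetric])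
  have pp: "(-1::real)^p * (-1)^p = 1" by (simp flip: power_add)
  have a1: "Bcoef (m1+m2) j1 j2 p m1 = - ((-1)^p * (C0 * (-1)^m1 * (rGamma (2 * j1 + real m1) * Y1)))"
    unfolding Bcoef_def C0_def Y1_def by (simp add: algebra_simps)
  have a2: "Acoef (m1+m2) j1 j2 m1 = C0 * (-1)^m1 * (X1 * rGamma (2 * j2 + real m2))"
    unfolding Acoef_def C0_def X1_def by (simp add: algebra_simps)
  have "- ((2*j1 + real m1) * Acoef (m1+m2) j1 j2 m1)
   - (-1)^p * ((2*j2 + real m2) * Bcoef (m1+m2) j1 j2 p m1) = 
    ((-1)^p * (-1)^p - 1) * ((2*j1 + real m1) * (2*j2 + real m2) * C0 * (-1)^m1 * X1 * Y1)"
    unfolding a1 a2 e2 e3 by algebra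
  then show ?thesis unfolding pp by simp
qed

lemma rG_fact: "rGamma (1 + real k) = inverse (fact k)"
  by (simp add: rGamma_inverse_Gamma Gamma_fact)

lemma LA: assumes "p \<in> {0,1}"
  shows "fact (m1+m2) * (-1)^(p+1) * ((-1)^((2*m1+1+1-p) div 2) * (rGamma (1 + real ((2*m1+1) div 2))
     * rGamma (1 + real ((2*(m1+m2)+1-(2*m1+1)) div 2)) * rGamma (2*j1 + real ((2*m1+1+1) div 2))
     * rGamma (2*j2 + real ((2*(m1+m2)+1-(2*m1+1)+1) div 2)))) = Acoef (m1+m2) j1 j2 m1"
proof -
  have d1: "(2*m1+1) div 2 = m1" "(2*(m1+m2)+1-(2*m1+1)) div 2 = m2" "(2*m1+1+1) div 2 = m1 + 1"
    "(2*(m1+m2)+1-(2*m1+1)+1) div 2 = m2" by auto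
  have s: "(-1::real)^(p+1) * (-1)^((2*m1+1+1-p) div 2) = (-1)^m1"
    using assms by (auto simp: power_add)
  have b: "real ((m1+m2) choose m1) = fact (m1+m2) / (fact m1 * fact m2)"
    using binomial_fact[of m1 "m1+m2", where 'a=real] by simp
  have d2: "(2*m1+1+1-0) div 2 = m1+1" "(2*m1+1+1-1) div 2 = m1" by auto
  from assms consider "p = 0" | "p = 1" by auto
  then show ?thesis
  proof cases
    case 1 show ?thesis unfolding d1 1 d2 Acoef_def rG_fact b by (simp add: field_simps)
  next
    case 2 show ?thesis unfolding d1 2 d2 Acoef_def rG_fact b by (simp add: field_simps)
  qed
qed

lemma LB: assumes "p \<in> {0,1}"
  shows "fact (m1+m2) * (-1)^(p+1) * ((-1)^((2*m1+1-p) div 2) * (rGamma (1 + real ((2*m1) div 2))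
     * rGamma (1 + real ((2*(m1+m2)+1-(2*m1)) div 2)) * rGamma (2*j1 + real ((2*m1+1) div 2))
     * rGamma (2*j2 + real ((2*(m1+m2)+1-(2*m1)+1) div 2)))) = Bcoef (m1+m2) j1 j2 p m1"
proof -
  have d1: "(2*m1) div 2 = m1" "(2*(m1+m2)+1-(2*m1)) div 2 = m2" "(2*m1+1) div 2 = m1"
    "(2*(m1+m2)+1-(2*m1)+1) div 2 = m2 + 1" by auto
  have s: "(-1::real)^(p+1) * (-1)^((2*m1+1-p) div 2) = - ((-1)^p * (-1)^m1)"
    using assms by (auto simp: power_add)
  have b: "real ((m1+m2) choose m1) = fact (m1+m2) / (fact m1 * fact m2)"
    using binomial_fact[of m1 "m1+m2", where 'a=real] by simp
  show ?thesis unfolding d1 Bcoef_def rG_fact b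
    using s by (simp add: field_simps)
qed



lemma mcoef_far: "\<not> fst b \<le> Suc (fst a) \<Longrightarrow> mcoef c J G a b = 0"
  by (cases a; cases b; cases G) auto

lemma act_basis: "act c J G (basis_vec b) = (\<lambda>a. mcoef c J G a b)"
proof
  fix a
  have "act c J G (basis_vec b) a = (\<Sum>b'\<in>{b'. fst b' \<le> Suc (fst a)}. if b' = b then mcoef c J G a b else 0)"
    unfolding act_def basis_vec_def by (intro sum.cong) auto
  also have "\<dots> = mcoef c J G a b"
    using mcoef_far[of b a c J G] by (simp add: finite_idx_le)
  finally show "act c J G (basis_vec b) a = mcoef c J G a b" .
qed

lemma Lp_pow: "(act c J Lp ^^ k) (basis_vec (m, x)) = basis_vec (m + k, x)"
  by (induction k) (simp_all add: act_basis, auto simp: basis_vec_def fun_eq_iff)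

lemma X_Omega: "act c J (Xgen c) Omega = basis_vec (0, True)"
  unfolding Omega_def act_basis by (cases c) (auto simp: basis_vec_def fun_eq_iff Xgen_def)

lemma U_pow: "(Uplus c J ^^ k) Omega = basis_vec (k div 2, odd k)"
proof (induction k)
  case 0 then show ?case by (simp add: Omega_def)
next
  case (Suc k)
  have "(Uplus c J ^^ Suc k) Omega = Uplus c J (basis_vec (k div 2, odd k))" using Suc by simp
  then show ?case
    unfolding Uplus_def act_basis by (cases c) (auto simp: basis_vec_def fun_eq_iff)
qed

lemma sum_single:
  fixes f g :: "idx \<Rightarrow> complex"
  assumes "\<And>b. b \<noteq> b0 \<Longrightarrow> f b = 0" "fst b0 \<le> k"
  shows "(\<Sum>b\<in>{b::idx. fst b \<le> k}. f b * g b) = f b0 * g b0"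
proof -
  have "(\<Sum>b\<in>{b::idx. fst b \<le> k}. f b * g b) = (\<Sum>b\<in>{b::idx. fst b \<le> k}. if b = b0 then f b0 * g b0 else 0)"
    using assms(1) by (intro sum.cong) auto
  also have "\<dots> = f b0 * g b0" using assms(2) by (simp add: finite_idx_le)
  finally show ?thesis .
qed


definition Wf :: "nat \<Rightarrow> real \<Rightarrow> real \<Rightarrow> nat \<Rightarrow> tvec" where
  "Wf n j1 j2 p = (\<lambda>((m1,y1),(m2,y2)). if m1 + m2 = n \<and> y1 \<and> \<not> y2 then complex_of_real (Acoef n j1 j2 m1)
     else if m1 + m2 = n \<and> \<not> y1 \<and> y2 then complex_of_real (Bcoef n j1 j2 p m1) else 0)"

fun tgt :: "bool \<Rightarrow> gen \<Rightarrow> idx \<Rightarrow> idx" where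
  "tgt c Lm (m, y) = (Suc m, y)"
| "tgt c Vm (m, y) = (if c then (Suc m, False) else (m, True))"
| "tgt c Wm (m, y) = (if c then (m, True) else (Suc m, False))"
| "tgt c G (m, y) = (m, y)"

lemma tgt_ok: "G \<in> {Lm, L0, Bg, Vm, Wm} \<Longrightarrow> b \<noteq> tgt c G a \<Longrightarrow> mcoef c J G a b = 0"
proof -
  assume G: "G \<in> {Lm, L0, Bg, Vm, Wm}" and b: "b \<noteq> tgt c G a"
  obtain m y where a: "a = (m, y)" by (cases a)
  obtain n x where bb: "b = (n, x)" by (cases b)
  show ?thesis using G b unfolding a bb
    by (cases x; cases y; cases c; cases G; simp)
qed

lemma tgt_le: "fst (tgt c G a) \<le> Suc (fst a)"
  by (cases a; cases G) auto

lemma tact_pt: assumes "G \<in> {Lm, L0, Bg, Vm, Wm}"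
  shows "tact c J1 J2 p G w (a1, a2) = mcoef c J1 G a1 (tgt c G a1) * w (tgt c G a1, a2)
    + (if odd_gen G \<and> par p a1 = 1 then -1 else 1) * (mcoef c J2 G a2 (tgt c G a2) * w (a1, tgt c G a2))"
proof -
  have "(\<Sum>b1\<in>{b. fst b \<le> Suc (fst a1)}. mcoef c J1 G a1 b1 * w (b1, a2)) = mcoef c J1 G a1 (tgt c G a1) * w (tgt c G a1, a2)"
    by (rule sum_single[where f = "\<lambda>b. mcoef c J1 G a1 b" and g = "\<lambda>b. w (b, a2)"]) (use tgt_ok[OF assms] tgt_le in auto)
  moreover have "(\<Sum>b2\<in>{b. fst b \<le> Suc (fst a2)}. mcoef c J2 G a2 b2 * w (a1, b2)) = mcoef c J2 G a2 (tgt c G a2) * w (a1, tgt c G a2)"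
    by (rule sum_single[where f = "\<lambda>b. mcoef c J2 G a2 b" and g = "\<lambda>b. w (a1, b)"]) (use tgt_ok[OF assms] tgt_le in auto)
  ultimately show ?thesis unfolding tact_def by simp
qed

lemmas cplx = of_real_add of_real_mult of_real_diff of_real_minus of_real_numeral of_real_1 of_real_0 of_real_of_nat_eq of_nat_Suc of_real_power

lemma hw_Lm: "tact c j1 j2 p Lm (Wf n j1 j2 p) ((m1, y1), (m2, y2)) = 0"
proof (cases "n = Suc (m1 + m2)")
  case True
  note l1 = L1[of m1 j1 m2 j2, THEN arg_cong[where f=complex_of_real], unfolded cplx]
  note l2 = L2[of m1 j1 m2 j2 p, THEN arg_cong[where f=complex_of_real], unfolded cplx]
  show ?thesis
    unfolding tact_pt[of Lm, simplified] tgt.simps mcoef.simps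
    apply (simp only: Wf_def split_conv)
    apply (cases y1; cases y2)
       apply (simp_all add: odd_gen_def True)
    using l1 apply algebra
    using l2 apply algebra
    done
next
  case False
  then show ?thesis
    unfolding tact_pt[of Lm, simplified] tgt.simps mcoef.simps
    by (simp only: Wf_def split_conv) (cases y1; cases y2; simp add: odd_gen_def)
qed


lemma sgn_par: "p \<in> {0,1} \<Longrightarrow> (if odd_gen G \<and> par p (m, y) = 1 then -1 else 1 :: complex)
   = (if odd_gen G then (-1)^p * (if y then -1 else 1) else 1)"
  by (auto simp: par_def)

lemma hw_VW: assumes "p \<in> {0,1}" and G: "G = Vm \<or> G = Wm"
  shows "tact c j1 j2 p G (Wf n j1 j2 p) ((m1, y1), (m2, y2)) = 0"
proof -
  have G': "G \<in> {Lm, L0, Bg, Vm, Wm}" using G by auto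
  have og: "odd_gen G" using G by (auto simp: odd_gen_def)
  define s where "s = (-1::complex)^p"
  note base = tact_pt[OF G', of c j1 j2 p "Wf n j1 j2 p" "(m1, y1)" "(m2, y2)", unfolded sgn_par[OF assms(1)] og if_True]
  consider "n = Suc (m1 + m2)" | "n = m1 + m2" | "n \<noteq> Suc (m1 + m2) \<and> n \<noteq> m1 + m2" by blast
  then show ?thesis
  proof cases
    case 1
    note l3 = L3[of m1 m2 j1 j2 p, THEN arg_cong[where f=complex_of_real], unfolded cplx]
    from G show ?thesis
    proof
      assume GV: "G = Vm"
      show ?thesis unfolding base unfolding GV tgt.simps
        apply (cases c; cases y1; cases y2; simp add: Wf_def odd_gen_def 1)
        using l3 unfolding s_def[symmetric] by algebra+
    next
      assume GW: "G = Wm"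
      show ?thesis unfolding base unfolding GW tgt.simps
        apply (cases c; cases y1; cases y2; simp add: Wf_def odd_gen_def 1)
        using l3 unfolding s_def[symmetric] by algebra+
    qed
  next
    case 2
    note l4 = L4[of j1 m1 m2 j2 p, THEN arg_cong[where f=complex_of_real], unfolded cplx]
    from G show ?thesis
    proof
      assume GV: "G = Vm"
      show ?thesis unfolding base unfolding GV tgt.simps
        apply (cases c; cases y1; cases y2; simp add: Wf_def odd_gen_def 2)
        using l4 unfolding s_def[symmetric] by algebra+
    next
      assume GW: "G = Wm"
      show ?thesis unfolding base unfolding GW tgt.simps
        apply (cases c; cases y1; cases y2; simp add: Wf_def odd_gen_def 2)
        using l4 unfolding s_def[symmetric] by algebra+
    qed
  next
    case 3
    from G show ?thesis
    proof
      assume GV: "G = Vm"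
      show ?thesis unfolding base unfolding GV tgt.simps
        using 3 by (cases c; cases y1; cases y2; simp add: Wf_def odd_gen_def)
    next
      assume GW: "G = Wm"
      show ?thesis unfolding base unfolding GW tgt.simps
        using 3 by (cases c; cases y1; cases y2; simp add: Wf_def odd_gen_def)
    qed
  qed
qed

lemma hw_L0: "tact c j1 j2 p L0 (Wf n j1 j2 p) ((m1, y1), (m2, y2)) =
    of_real (j1 + j2 + real n + 1/2) * Wf n j1 j2 p ((m1, y1), (m2, y2))"
  unfolding tact_pt[of L0, simplified]
  by (cases y1; cases y2; cases "n = m1 + m2"; auto simp: Wf_def odd_gen_def algebra_simps)

lemma hw_Bg: "tact c j1 j2 p Bg (Wf n j1 j2 p) ((m1, y1), (m2, y2)) =
    of_real (if c then - (j1 + j2) + 1/2 else (j1 + j2) - 1/2) * Wf n j1 j2 p ((m1, y1), (m2, y2))"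
  unfolding tact_pt[of Bg, simplified]
  by (cases c; cases y1; cases y2; cases "n = m1 + m2"; auto simp: Wf_def odd_gen_def algebra_simps)


lemma w_closed: "(\<lambda>a. \<Sum>n1\<in>{0..n}. of_nat (n choose n1) * (-1) ^ n1 *
        (of_real (rGamma (2 * j1 + 1 + real n1) * rGamma (2 * j2 + real (n - n1))) *
           tens ((act c j1 Lp ^^ n1) (act c j1 (Xgen c) Omega))
                ((act c j2 Lp ^^ (n - n1)) Omega) a
         - (-1) ^ p * of_real (rGamma (2 * j1 + real n1) * rGamma (2 * j2 + 1 + real (n - n1))) *
           tens ((act c j1 Lp ^^ n1) Omega)
                ((act c j2 Lp ^^ (n - n1)) (act c j2 (Xgen c) Omega)) a)) = Wf n j1 j2 p"
proof
  fix a :: "idx \<times> idx"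
  obtain m1 y1 m2 y2 where a: "a = ((m1, y1), (m2, y2))" by (metis prod.exhaust)
  define V where "V = (if m1 + m2 = n \<and> y1 \<and> \<not> y2 then complex_of_real (Acoef n j1 j2 m1)
     else if m1 + m2 = n \<and> \<not> y1 \<and> y2 then complex_of_real (Bcoef n j1 j2 p m1) else 0)"
  have "(\<Sum>n1\<in>{0..n}. of_nat (n choose n1) * (-1) ^ n1 *
        (of_real (rGamma (2 * j1 + 1 + real n1) * rGamma (2 * j2 + real (n - n1))) *
           tens ((act c j1 Lp ^^ n1) (act c j1 (Xgen c) Omega))
                ((act c j2 Lp ^^ (n - n1)) Omega) a
         - (-1) ^ p * of_real (rGamma (2 * j1 + real n1) * rGamma (2 * j2 + 1 + real (n - n1))) *
           tens ((act c j1 Lp ^^ n1) Omega)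
                ((act c j2 Lp ^^ (n - n1)) (act c j2 (Xgen c) Omega)) a))
      = (\<Sum>n1\<in>{0..n}. if n1 = m1 then V else 0)"
  proof (rule sum.cong[OF refl])
    fix n1 assume n1: "n1 \<in> {0..n}"
    show "of_nat (n choose n1) * (-1) ^ n1 *
        (of_real (rGamma (2 * j1 + 1 + real n1) * rGamma (2 * j2 + real (n - n1))) *
           tens ((act c j1 Lp ^^ n1) (act c j1 (Xgen c) Omega))
                ((act c j2 Lp ^^ (n - n1)) Omega) a
         - (-1) ^ p * of_real (rGamma (2 * j1 + real n1) * rGamma (2 * j2 + 1 + real (n - n1))) *
           tens ((act c j1 Lp ^^ n1) Omega)
                ((act c j2 Lp ^^ (n - n1)) (act c j2 (Xgen c) Omega)) a) = (if n1 = m1 then V else 0)"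
      unfolding X_Omega unfolding Omega_def Lp_pow a
      using n1 by (cases y1; cases y2; auto simp: tens_def basis_vec_def V_def Acoef_def Bcoef_def)
  qed
  also have "\<dots> = V" by (simp add: V_def)
  also have "V = Wf n j1 j2 p a" by (simp add: V_def Wf_def a)
  finally show "(\<Sum>n1\<in>{0..n}. of_nat (n choose n1) * (-1) ^ n1 *
        (of_real (rGamma (2 * j1 + 1 + real n1) * rGamma (2 * j2 + real (n - n1))) *
           tens ((act c j1 Lp ^^ n1) (act c j1 (Xgen c) Omega))
                ((act c j2 Lp ^^ (n - n1)) Omega) a
         - (-1) ^ p * of_real (rGamma (2 * j1 + real n1) * rGamma (2 * j2 + 1 + real (n - n1))) *
           tens ((act c j1 Lp ^^ n1) Omega)
                ((act c j2 Lp ^^ (n - n1)) (act c j2 (Xgen c) Omega)) a)) = Wf n j1 j2 p a" .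
qed


lemma arith_iff: assumes k: "(k::nat) \<le> 2*n+1"
  shows "((k div 2 = m1 \<and> odd k = y1) \<and> ((2*n+1-k) div 2 = m2 \<and> odd (2*n+1-k) = y2))
   \<longleftrightarrow> (k = 2*m1 + (if y1 then 1 else 0) \<and> m1 + m2 = n \<and> y1 \<noteq> y2)"
proof (cases "k = 2*m1 + (if y1 then 1 else 0)")
  case True
  show ?thesis
  proof (cases y1)
    case y: True
    with True have kk: "k = 2*m1+1" by simp
    with k have mn: "m1 \<le> n" by simp
    then have e: "2*n+1-k = 2*(n-m1)" using kk by simp
    show ?thesis unfolding e using kk y mn by auto
  next
    case y: False
    with True have kk: "k = 2*m1" by simp
    with k have mn: "m1 \<le> n" by simp
    then have e: "2*n+1-k = 2*(n-m1) + 1" using kk by simp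
    show ?thesis unfolding e using kk y mn by auto
  qed
next
  case False
  have "k = 2*(k div 2) + k mod 2" by simp
  moreover have "odd k \<longleftrightarrow> k mod 2 = 1" by (simp add: odd_iff_mod_2_eq_one)
  moreover have "k mod 2 = 0 \<or> k mod 2 = 1" by auto
  ultimately have "\<not> (k div 2 = m1 \<and> odd k = y1)" using False by auto
  then show ?thesis using False by auto
qed

lemma tens_U: "k1 \<le> 2*n+1 \<Longrightarrow> tens (basis_vec (k1 div 2, odd k1)) (basis_vec ((2*n+1-k1) div 2, odd (2*n+1-k1))) ((m1,y1),(m2,y2))
   = (if k1 = 2*m1 + (if y1 then 1 else 0) then (if m1 + m2 = n \<and> y1 \<noteq> y2 then 1 else 0) else 0)"
proof -
  assume k: "k1 \<le> 2*n+1"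
  have "tens (basis_vec (k1 div 2, odd k1)) (basis_vec ((2*n+1-k1) div 2, odd (2*n+1-k1))) ((m1,y1),(m2,y2))
     = (if ((k1 div 2 = m1 \<and> odd k1 = y1) \<and> ((2*n+1-k1) div 2 = m2 \<and> odd (2*n+1-k1) = y2)) then 1 else 0)"
    unfolding tens_def basis_vec_def by auto
  also have "\<dots> = (if k1 = 2*m1 + (if y1 then 1 else 0) \<and> m1 + m2 = n \<and> y1 \<noteq> y2 then 1 else 0)"
    by (simp only: arith_iff[OF k])
  finally show ?thesis by simp
qed

lemma lhs_closed: assumes "p \<in> {0,1}"
  shows "(\<lambda>a. of_nat (fact n) * (-1) ^ (p + 1) *
            (\<Sum>k1\<in>{0..2 * n + 1}.
               (-1) ^ ((k1 + 1 - p) div 2) *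
               of_real (rGamma (1 + real (k1 div 2)) * rGamma (1 + real ((2 * n + 1 - k1) div 2))
                        * rGamma (2 * j1 + real ((k1 + 1) div 2))
                        * rGamma (2 * j2 + real ((2 * n + 1 - k1 + 1) div 2))) *
               tens ((Uplus c j1 ^^ k1) Omega) ((Uplus c j2 ^^ (2 * n + 1 - k1)) Omega) a)) = Wf n j1 j2 p"
proof
  fix a :: "idx \<times> idx"
  obtain m1 y1 m2 y2 where a: "a = ((m1, y1), (m2, y2))" by (metis prod.exhaust)
  define g where "g k1 = (-1) ^ ((k1 + 1 - p) div 2) *
               complex_of_real (rGamma (1 + real (k1 div 2)) * rGamma (1 + real ((2 * n + 1 - k1) div 2))
                        * rGamma (2 * j1 + real ((k1 + 1) div 2))
                        * rGamma (2 * j2 + real ((2 * n + 1 - k1 + 1) div 2)))" for k1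
  define K where "K = 2*m1 + (if y1 then 1 else 0)"
  have "(\<Sum>k1\<in>{0..2 * n + 1}. g k1 * tens ((Uplus c j1 ^^ k1) Omega) ((Uplus c j2 ^^ (2 * n + 1 - k1)) Omega) a)
      = (\<Sum>k1\<in>{0..2 * n + 1}. if k1 = K then (if m1 + m2 = n \<and> y1 \<noteq> y2 then g K else 0) else 0)"
  proof (rule sum.cong[OF refl])
    fix k1 assume "k1 \<in> {0..2 * n + 1}"
    then have k: "k1 \<le> 2 * n + 1" by simp
    show "g k1 * tens ((Uplus c j1 ^^ k1) Omega) ((Uplus c j2 ^^ (2 * n + 1 - k1)) Omega) a
      = (if k1 = K then (if m1 + m2 = n \<and> y1 \<noteq> y2 then g K else 0) else 0)"
      unfolding U_pow a tens_U[OF k] K_def by simp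
  qed
  also have "\<dots> = (if m1 + m2 = n \<and> y1 \<noteq> y2 then g K else 0)"
    by (auto simp: K_def)
  finally have eq: "(\<Sum>k1\<in>{0..2 * n + 1}. g k1 * tens ((Uplus c j1 ^^ k1) Omega) ((Uplus c j2 ^^ (2 * n + 1 - k1)) Omega) a)
      = (if m1 + m2 = n \<and> y1 \<noteq> y2 then g K else 0)" .
  have "of_nat (fact n) * (-1) ^ (p + 1) * (if m1 + m2 = n \<and> y1 \<noteq> y2 then g K else 0) = Wf n j1 j2 p a"
  proof (cases "m1 + m2 = n")
    case True
    note la = LA[of p m1 m2 j1 j2, OF assms, THEN arg_cong[where f=complex_of_real]]
    note lb = LB[of p m1 m2 j1 j2, OF assms, THEN arg_cong[where f=complex_of_real]]
    show ?thesis
    proof (cases y1)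
      case y1: True
      show ?thesis using la unfolding a K_def g_def True[symmetric] using y1 
        by (cases y2) (simp_all add: Wf_def)
    next
      case y1: False
      show ?thesis using lb unfolding a K_def g_def True[symmetric] using y1 
        by (cases y2) (simp_all add: Wf_def)
    qed
  next
    case False
    then show ?thesis by (simp add: Wf_def a)
  qed
  with eq show "of_nat (fact n) * (-1) ^ (p + 1) *
            (\<Sum>k1\<in>{0..2 * n + 1}.
               (-1) ^ ((k1 + 1 - p) div 2) *
               of_real (rGamma (1 + real (k1 div 2)) * rGamma (1 + real ((2 * n + 1 - k1) div 2))
                        * rGamma (2 * j1 + real ((k1 + 1) div 2))
                        * rGamma (2 * j2 + real ((2 * n + 1 - k1 + 1) div 2))) *
               tens ((Uplus c j1 ^^ k1) Omega) ((Uplus c j2 ^^ (2 * n + 1 - k1)) Omega) a) = Wf n j1 j2 p a"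
    unfolding g_def by simp
qed


theorem mainTheorem3:
  fixes j1 j2 :: real and p :: nat and c :: bool and n :: nat
  assumes "p \<in> {0, 1}"
  defines "w \<equiv> (\<lambda>a. \<Sum>n1\<in>{0..n}. of_nat (n choose n1) * (-1) ^ n1 *
        (of_real (rGamma (2 * j1 + 1 + real n1) * rGamma (2 * j2 + real (n - n1))) *
           tens ((act c j1 Lp ^^ n1) (act c j1 (Xgen c) Omega))
                ((act c j2 Lp ^^ (n - n1)) Omega) a
         - (-1) ^ p * of_real (rGamma (2 * j1 + real n1) * rGamma (2 * j2 + 1 + real (n - n1))) *
           tens ((act c j1 Lp ^^ n1) Omega)
                ((act c j2 Lp ^^ (n - n1)) (act c j2 (Xgen c) Omega)) a))"
  shows "(\<lambda>a. of_nat (fact n) * (-1) ^ (p + 1) *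
            (\<Sum>k1\<in>{0..2 * n + 1}.
               (-1) ^ ((k1 + 1 - p) div 2) *
               of_real (rGamma (1 + real (k1 div 2)) * rGamma (1 + real ((2 * n + 1 - k1) div 2))
                        * rGamma (2 * j1 + real ((k1 + 1) div 2))
                        * rGamma (2 * j2 + real ((2 * n + 1 - k1 + 1) div 2))) *
               tens ((Uplus c j1 ^^ k1) Omega) ((Uplus c j2 ^^ (2 * n + 1 - k1)) Omega) a)) = w
       \<and> tact c j1 j2 p Lm w = (\<lambda>_. 0)
       \<and> tact c j1 j2 p Vm w = (\<lambda>_. 0)
       \<and> tact c j1 j2 p Wm w = (\<lambda>_. 0)
       \<and> tact c j1 j2 p L0 w = (\<lambda>a. of_real (j1 + j2 + real n + 1/2) * w a)
       \<and> tact c j1 j2 p Bg w =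
           (\<lambda>a. of_real (if c then - (j1 + j2) + 1/2 else (j1 + j2) - 1/2) * w a)"
  proof -
  have W: "w = Wf n j1 j2 p" unfolding w_def by (rule w_closed)
  have split: "\<And>f g :: tvec. (\<And>m1 y1 m2 y2. f ((m1, y1), (m2, y2)) = g ((m1, y1), (m2, y2))) \<Longrightarrow> f = g"
    by (auto simp: fun_eq_iff)
  show ?thesis unfolding W
  proof (intro conjI)
    show "tact c j1 j2 p Lm (Wf n j1 j2 p) = (\<lambda>_. 0)" by (rule split) (simp only: hw_Lm)
    show "tact c j1 j2 p Vm (Wf n j1 j2 p) = (\<lambda>_. 0)" by (rule split) (simp only: hw_VW[OF assms(1)] simp_thms)
    show "tact c j1 j2 p Wm (Wf n j1 j2 p) = (\<lambda>_. 0)" by (rule split) (simp only: hw_VW[OF assms(1)] simp_thms)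
    show "tact c j1 j2 p L0 (Wf n j1 j2 p) = (\<lambda>a. of_real (j1 + j2 + real n + 1/2) * Wf n j1 j2 p a)"
      by (rule split) (simp only: hw_L0)
    show "tact c j1 j2 p Bg (Wf n j1 j2 p) =
           (\<lambda>a. of_real (if c then - (j1 + j2) + 1/2 else (j1 + j2) - 1/2) * Wf n j1 j2 p a)"
      by (rule split) (simp only: hw_Bg)
  qed (rule lhs_closed[OF assms(1)])
qed

end
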